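(* Assume the standing assumptions (P1)–(P6) described in the context. Let $(f_0,t_0)\in\mathrm{Dom}\,\mathcal P$ with $f_0\in F_+$, let $T\in(t_0,+\infty]$, and let $\varphi_{ap}\in C([t_0,T),F_+)\cap C^1([t_0,T),F_-)$ with graph contained in $\mathrm{Dom}\,\mathcal P$. Put $d(\varphi_{ap}):=\varphi_{ap}(t_0)-f_0$ and $e(\varphi_{ap})(t):=\dot\varphi_{ap}(t)-\mathcal A\varphi_{ap}(t)-\mathcal P(\varphi_{ap}(t),t)$. Then: (i) $\varphi_{ap}\in C([t_0,T),F)$, and its integral error $E(\varphi_{ap})(t):=\varphi_{ap}(t)-e^{(t-t_0)\mathcal A}f_0-\int_{t_0}^te^{(t-s)\mathcal A}\mathcal P(\varphi_{ap}(s),s)\,ds$ satisfies $$E(\varphi_{ap})(t)=e^{(t-t_0)\mathcal A}d(\varphi_{ap})+\int_{t_0}^te^{(t-s)\mathcal A}e(\varphi_{ap})(s)\,ds\qquad(t\in[t_0,T)).$$ (ii) If $\delta\ge0$ with $\|d(\varphi_{ap})\|\le\delta$ and $\epsilon\in C([t_0,T),[0,+\infty))$ with $\|e(\varphi_{ap})(t)\|_-\le\epsilon(t)$ for all $t$, then $\|E(\varphi_{ap})(t)\|\le u(t-t_0)\delta+\int_{t_0}^tu_-(t-s)\epsilon(s)\,ds$ for all $t\in[t_0,T)$.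
   Context: All Banach spaces are over a common field ($\mathbb R$ or $\mathbb C$). For Banach spaces $X,Y$, $X\hookrightarrow Y$ means that $X$ is a dense linear subspace of $Y$ and the inclusion is continuous. Standing assumptions: (P1) $F_+,F,F_-$ are Banach spaces with norms $\|\cdot\|_+,\|\cdot\|,\|\cdot\|_-$ and $F_+\hookrightarrow F\hookrightarrow F_-$; $B(f_0,r):=\{f\in F:\|f-f_0\|<r\}$. (P2) $\mathcal A:F_+\to F_-$ is linear and on $F_+$ the norm $\|\cdot\|_+$ is equivalent to $f\mapsto\|f\|_-+\|\mathcal Af\|_-$. (P3) $\mathcal A$, viewed as a densely defined operator in $F_-$ with domain $F_+$, generates a strongly continuous semigroup $(e^{t\mathcal A})_{t\ge0}$ on $F_-$. (P4) $e^{t\mathcal A}(F)\subset F$ for $t\ge0$, $(f,t)\mapsto e^{t\mathcal A}f$ is continuous from $F\times[0,\infty)$ to $F$, and $u\in C([0,\infty),(0,\infty))$ satisfies $\|e^{t\mathcal A}f\|\le u(t)\|f\|$. (P5) $e^{t\mathcal A}(F_-)\subset F$ for $t>0$, $(f,t)\mapsto e^{t\mathcal A}f$ is continuous from $F_-\times(0,\infty)$ to $F$, and $u_-\in C((0,\infty),(0,\infty))$ satisfies $\|e^{t\mathcal A}f\|\le u_-(t)\|f\|_-$ for $t>0$, $f\in F_-$, with $u_-(t)=O(t^{-(1-\sigma)})$ as $t\to0^+$ for some $\sigma\in(0,1]$. (P6) $\mathcal P:\mathrm{Dom}\,\mathcal P\subset F\times\mathbb R\to F_-$; the domain is semi-open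 (for each $(f_0,t_0)\in\mathrm{Dom}\,\mathcal P$ there are $\delta,r\in(0,+\infty]$ with $B(f_0,r)\times[t_0,t_0+\delta)\subset\mathrm{Dom}\,\mathcal P$), and for every closed bounded $\mathcal C\subset F\times\mathbb R$ with $\mathcal C\subset\mathrm{Dom}\,\mathcal P$ there are $L,M\ge0$ with $\|\mathcal P(f,t)-\mathcal P(f',t')\|_-\le L\|f-f'\|+M|t-t'|$ on $\mathcal C$. The graph of $\varphi$ is $\{(\varphi(t),t)\}$. *)

theory Defs
  imports "HOL-Analysis.Analysis" "HOL-Library.Extended_Real"
begin

text \<open>Strongly continuous semigroup on a Banach space (values for t < 0 are irrelevant).\<close>
definition C0_semigroup :: "(real \<Rightarrow> 'm::banach \<Rightarrow> 'm) \<Rightarrow> bool" where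
  "C0_semigroup S \<longleftrightarrow>
     (\<forall>t\<ge>0. bounded_linear (S t)) \<and> S 0 = id \<and>
     (\<forall>s\<ge>0. \<forall>t\<ge>0. S (s + t) = S s \<circ> S t) \<and>
     (\<forall>x. continuous_on {0..} (\<lambda>t. S t x))"

definition generator_domain :: "(real \<Rightarrow> 'm::real_normed_vector \<Rightarrow> 'm) \<Rightarrow> 'm set" where
  "generator_domain S = {y. \<exists>l. ((\<lambda>h. (S h y - y) /\<^sub>R h) \<longlongrightarrow> l) (at_right 0)}"

text \<open>Types: 'p = F_+, 'f = F, 'm = F_-;
  i : F_+ \<rightarrow> F and j : F \<rightarrow> F_- are the inclusions; S t = e^{tA} on F_-;
  u, um = u_-, P the perturbation with domain DomP.\<close>
locale standing_assumptions =
  fixes i :: "'p::banach \<Rightarrow> 'f::banach"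
    and j :: "'f \<Rightarrow> 'm::banach"
    and A :: "'p \<Rightarrow> 'm"
    and S :: "real \<Rightarrow> 'm \<Rightarrow> 'm"
    and u :: "real \<Rightarrow> real"
    and um :: "real \<Rightarrow> real"
    and \<sigma> :: real
    and P :: "'f \<Rightarrow> real \<Rightarrow> 'm"
    and DomP :: "('f \<times> real) set"
  assumes P1_i: "bounded_linear i" "inj i" "closure (range i) = UNIV"
    and P1_j: "bounded_linear j" "inj j" "closure (range j) = UNIV"
    and P2_lin: "linear A"
    and P2_equiv: "\<exists>c>0. \<exists>C. \<forall>f. c * norm f \<le> norm (j (i f)) + norm (A f) \<and>
                              norm (j (i f)) + norm (A f) \<le> C * norm f"
    and P3_sg: "C0_semigroup S"
    and P3_dom: "generator_domain S = range (j \<circ> i)"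
    and P3_gen: "\<forall>f. ((\<lambda>h. (S h (j (i f)) - j (i f)) /\<^sub>R h) \<longlongrightarrow> A f) (at_right 0)"
    and P4_inv: "\<forall>t\<ge>0. \<forall>f. S t (j f) \<in> range j"
    and P4_cont: "continuous_on (UNIV \<times> {0..}) (\<lambda>(f, t). inv j (S t (j f)))"
    and P4_u: "continuous_on {0..} u" "\<forall>t\<ge>0. u t > 0"
    and P4_bound: "\<forall>t\<ge>0. \<forall>f. norm (inv j (S t (j f))) \<le> u t * norm f"
    and P5_inv: "\<forall>t>0. \<forall>g. S t g \<in> range j"
    and P5_cont: "continuous_on (UNIV \<times> {0<..}) (\<lambda>(g, t). inv j (S t g))"
    and P5_um: "continuous_on {0<..} um" "\<forall>t>0. um t > 0"
    and P5_bound: "\<forall>t>0. \<forall>g. norm (inv j (S t g)) \<le> um t * norm g"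
    and P5_sigma: "0 < \<sigma>" "\<sigma> \<le> 1"
    and P5_sing: "\<exists>C. eventually (\<lambda>t. um t \<le> C * t powr (\<sigma> - 1)) (at_right 0)"
    and P6_semiopen: "\<forall>(f0, t0) \<in> DomP. \<exists>\<delta>>0. \<exists>r>0. ball f0 r \<times> {t0..<t0 + \<delta>} \<subseteq> DomP"
    and P6_lip: "\<forall>C. closed C \<and> bounded C \<and> C \<subseteq> DomP \<longrightarrow>
                   (\<exists>L\<ge>0. \<exists>M\<ge>0. \<forall>(f, t) \<in> C. \<forall>(f', t') \<in> C.
                      norm (P f t - P f' t') \<le> L * norm (f - f') + M * \<bar>t - t'\<bar>)"

end

theory Submission
  imports Defs
begin


lemma hake:
  fixes h :: "real \<Rightarrow> 'a::banach" and k :: "real \<Rightarrow> real"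
  assumes ab: "a \<le> b" and hc: "continuous_on {a..<b} h" and ki: "k integrable_on {a..b}"
    and hk: "\<And>s. s \<in> {a..<b} \<Longrightarrow> norm (h s) \<le> k s"
  shows "h integrable_on {a..b}"
proof (cases "a = b")
  case True then show ?thesis using integrable_on_refl[of h b] by simp
next
  case False
  with ab have ab': "a < b" by simp
  define G where "G = (\<lambda>r. integral {a..r} h)"
  define K where "K = (\<lambda>r. integral {a..r} k)"
  have hint: "h integrable_on {x..y}" if "a \<le> x" "y < b" for x y
  proof -
    have "continuous_on {x..y} h" by (rule continuous_on_subset[OF hc]) (use that in auto)
    then show ?thesis by (rule integrable_continuous_real)
  qed
  have Kc: "uniformly_continuous_on {a..b} K"
    unfolding K_def by (rule compact_uniformly_continuous[OF indefinite_integral_continuous_1[OF ki]]) simp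
  have le1: "dist (G y) (G x) \<le> dist (K y) (K x)" if "x \<in> {a..<b}" "y \<in> {a..<b}" "x \<le> y" for x y
  proof -
    have ax: "a \<le> x" "x \<le> y" "y < b" using that by auto
    have "integral {a..x} h + integral {x..y} h = integral {a..y} h"
      by (rule Henstock_Kurzweil_Integration.integral_combine[OF ax(1,2) hint[OF order_refl ax(3)]])
    then have "G y = G x + integral {x..y} h" unfolding G_def by simp
    moreover have "integral {a..x} k + integral {x..y} k = integral {a..y} k"
      by (rule Henstock_Kurzweil_Integration.integral_combine[OF ax(1,2) integrable_subinterval_real[OF ki]]) (use ax in auto)
    then have "K y = K x + integral {x..y} k" unfolding K_def by simp
    moreover have "norm (integral {x..y} h) \<le> integral {x..y} k"
    proof (rule integral_norm_bound_integral)
      show "h integrable_on {x..y}" using hint ax by auto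
      show "k integrable_on {x..y}" by (rule integrable_subinterval_real[OF ki]) (use ax in auto)
      fix s assume "s \<in> {x..y}" then show "norm (h s) \<le> k s" using hk ax by auto
    qed
    ultimately show ?thesis by (simp add: dist_norm)
  qed
  have le: "dist (G y) (G x) \<le> dist (K y) (K x)" if "x \<in> {a..<b}" "y \<in> {a..<b}" for x y
  proof (cases "x \<le> y")
    case True then show ?thesis using le1[OF that] by simp
  next
    case False then have "y \<le> x" by simp
    then show ?thesis using le1[OF that(2,1)] by (simp add: dist_commute)
  qed
  have Gu: "uniformly_continuous_on {a..<b} G"
    unfolding uniformly_continuous_on_def
  proof (intro allI impI)
    fix e :: real assume "e > 0"
    then obtain d where "d > 0" and d: "\<forall>x\<in>{a..b}. \<forall>x'\<in>{a..b}. dist x' x < d \<longrightarrow> dist (K x') (K x) < e"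
      using Kc unfolding uniformly_continuous_on_def by blast
    show "\<exists>d>0. \<forall>x\<in>{a..<b}. \<forall>x'\<in>{a..<b}. dist x' x < d \<longrightarrow> dist (G x') (G x) < e"
    proof (intro exI[of _ d] conjI ballI impI)
      fix x x' assume xx: "x \<in> {a..<b}" "x' \<in> {a..<b}" "dist x' x < d"
      have "dist (G x') (G x) \<le> dist (K x') (K x)" using le xx by blast
      also have "\<dots> < e" using d xx by auto
      finally show "dist (G x') (G x) < e" .
    qed (fact \<open>d > 0\<close>)
  qed
  obtain g where gu: "uniformly_continuous_on (closure {a..<b}) g" and gG: "\<And>x. x \<in> {a..<b} \<Longrightarrow> G x = g x"
    by (rule uniformly_continuous_on_extension_on_closure[OF Gu]) blast
  have cl: "closure {a..<b} = {a..b}" using ab' by simp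
  have gc: "continuous_on {a..b} g" using uniformly_continuous_imp_continuous[OF gu] cl by simp
  have "(h has_integral (g b - g a)) {a..b}"
  proof (rule fundamental_theorem_of_calculus_interior[OF ab gc])
    fix x assume x: "x \<in> {a<..<b}"
    define c where "c = (x + b) / 2"
    have xc: "a < x" "x < c" "c < b" using x unfolding c_def by auto
    have "continuous_on {a..c} h" by (rule continuous_on_subset[OF hc]) (use xc in auto)
    then have "((\<lambda>u. integral {a..u} h) has_vector_derivative h x) (at x within {a..c})"
      by (rule integral_has_vector_derivative) (use xc in auto)
    then have "(G has_vector_derivative h x) (at x within {a..c})" unfolding G_def .
    moreover have "x \<in> interior {a..c}" using xc by simp
    then have "at x within {a..c} = at x" by (rule at_within_interior)
    ultimately have "(G has_vector_derivative h x) (at x)" by (simp only:)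
    then show "(g has_vector_derivative h x) (at x)"
    proof (rule has_vector_derivative_transform_within_open[of _ _ _ "{a<..<b}"])
      show "open {a<..<b}" by simp
      show "x \<in> {a<..<b}" by (fact x)
      fix y assume "y \<in> {a<..<b}" then have "y \<in> {a..<b}" by simp
      then show "G y = g y" by (rule gG)
    qed
  qed
  then show ?thesis by (rule has_integral_integrable)
qed



lemma powr_int:
  fixes \<sigma> t0 t :: real
  assumes "\<sigma> > 0" "t0 \<le> t"
  shows "(\<lambda>s. (t - s) powr (\<sigma> - 1)) integrable_on {t0..t}"
proof -
  have "((\<lambda>s. (t - s) powr (\<sigma> - 1)) has_integral ((\<lambda>s. - ((t - s) powr \<sigma>) / \<sigma>) t - (\<lambda>s. - ((t - s) powr \<sigma>) / \<sigma>) t0)) {t0..t}"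
  proof (rule fundamental_theorem_of_calculus_interior[OF assms(2)])
    show "continuous_on {t0..t} (\<lambda>s. - ((t - s) powr \<sigma>) / \<sigma>)"
      by (intro continuous_intros continuous_on_powr') (use assms in auto)
    fix x assume x: "x \<in> {t0<..<t}"
    have "((\<lambda>s. - ((t - s) powr \<sigma>) / \<sigma>) has_real_derivative (t - x) powr (\<sigma> - 1)) (at x)"
      using x assms by (auto intro!: derivative_eq_intros simp: field_simps)
    then show "((\<lambda>s. - ((t - s) powr \<sigma>) / \<sigma>) has_vector_derivative (t - x) powr (\<sigma> - 1)) (at x)"
      by (simp add: has_real_derivative_iff_has_vector_derivative)
  qed
  then show ?thesis by (rule has_integral_integrable)
qed

context standing_assumptions begin

lemma um_bound:
  assumes "d > 0"
  shows "\<exists>M C. M \<ge> 0 \<and> C \<ge> 0 \<and> (\<forall>r. 0 < r \<and> r \<le> d \<longrightarrow> um r \<le> M + C * r powr (\<sigma> - 1))"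
proof -
  obtain C0 where "eventually (\<lambda>t. um t \<le> C0 * t powr (\<sigma> - 1)) (at_right 0)"
    using P5_sing by blast
  then obtain \<eta> where \<eta>: "\<eta> > 0" and \<eta>b: "\<And>y. 0 < y \<Longrightarrow> y < \<eta> \<Longrightarrow> um y \<le> C0 * y powr (\<sigma> - 1)"
    unfolding eventually_at_right_field by auto
  have "compact (um ` {\<eta>..d})"
    by (rule compact_continuous_image[OF continuous_on_subset[OF P5_um(1)]]) (use \<eta> in auto)
  then obtain M0 where M0: "\<And>x. x \<in> um ` {\<eta>..d} \<Longrightarrow> norm x \<le> M0"
    using compact_imp_bounded bounded_iff by metis
  show ?thesis
  proof (intro exI conjI allI impI)
    fix r assume r: "0 < r \<and> r \<le> d"
    show "um r \<le> max M0 0 + max C0 0 * r powr (\<sigma> - 1)"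
    proof (cases "r < \<eta>")
      case True
      have "um r \<le> C0 * r powr (\<sigma> - 1)" using \<eta>b r True by auto
      also have "\<dots> \<le> max C0 0 * r powr (\<sigma> - 1)" by (rule mult_right_mono) auto
      also have "\<dots> \<le> max M0 0 + max C0 0 * r powr (\<sigma> - 1)" by simp
      finally show ?thesis .
    next
      case False
      then have "norm (um r) \<le> M0" using M0 r by auto
      moreover have "0 \<le> max C0 0 * r powr (\<sigma> - 1)" by simp
      ultimately show ?thesis using abs_ge_self[of "um r"] max.cobounded1[of M0 0] by (simp only: real_norm_def)
    qed
  qed auto
qed


lemma um_int:
  fixes c :: "real \<Rightarrow> real"
  assumes tt: "t0 \<le> t" and cc: "continuous_on {t0..t} c"
  shows "(\<lambda>s. um (t - s) * c s) integrable_on {t0..t}"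
proof -
  obtain M C where MC: "M \<ge> 0" "C \<ge> 0" and Mb: "\<And>r. 0 < r \<Longrightarrow> r \<le> t - t0 + 1 \<Longrightarrow> um r \<le> M + C * r powr (\<sigma> - 1)"
    using um_bound[of "t - t0 + 1"] tt by auto
  have "compact (c ` {t0..t})" by (rule compact_continuous_image[OF cc]) simp
  then obtain B0 where B0: "\<And>x. x \<in> c ` {t0..t} \<Longrightarrow> norm x \<le> B0"
    using compact_imp_bounded bounded_iff by metis
  define B where "B = max B0 0"
  have B: "B \<ge> 0" "\<And>s. s \<in> {t0..t} \<Longrightarrow> \<bar>c s\<bar> \<le> B" using B0 unfolding B_def by force+
  show ?thesis
  proof (rule hake[OF tt])
    have "continuous_on {t0..<t} (\<lambda>s. um (t - s))"
      by (rule continuous_on_compose2[OF P5_um(1)]) (auto intro!: continuous_intros)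
    moreover have "continuous_on {t0..<t} c" by (rule continuous_on_subset[OF cc]) auto
    ultimately show "continuous_on {t0..<t} (\<lambda>s. um (t - s) * c s)" by (rule continuous_on_mult)
    show "(\<lambda>s. M * B + (C * B) * (t - s) powr (\<sigma> - 1)) integrable_on {t0..t}"
      by (intro integrable_add integrable_const_ivl) (use integrable_on_cmult_left[OF powr_int[OF P5_sigma(1) tt], of "C*B"] in simp)
    fix s assume s: "s \<in> {t0..<t}"
    have ump: "um (t - s) > 0" using P5_um(2) s by auto
    have "norm (um (t - s) * c s) = um (t - s) * \<bar>c s\<bar>" using ump by (simp add: abs_mult)
    also have "\<dots> \<le> um (t - s) * B" by (rule mult_left_mono) (use B s ump in auto)
    also have "\<dots> \<le> (M + C * (t - s) powr (\<sigma> - 1)) * B"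
      by (rule mult_right_mono) (use Mb[of "t - s"] s B in auto)
    also have "\<dots> = M * B + (C * B) * (t - s) powr (\<sigma> - 1)" by (simp add: algebra_simps)
    finally show "norm (um (t - s) * c s) \<le> M * B + (C * B) * (t - s) powr (\<sigma> - 1)" .
  qed
qed

lemma jinv: "t > 0 \<Longrightarrow> j (inv j (S t g)) = S t g"
  using P5_inv by (simp add: f_inv_into_f)

lemma Sj_int:
  fixes g :: "real \<Rightarrow> 'm"
  assumes tt: "t0 \<le> t" and gc: "continuous_on {t0..t} g"
  shows "(\<lambda>s. inv j (S (t - s) (g s))) integrable_on {t0..t}"
proof (rule hake[OF tt])
  have "continuous_on {t0..<t} ((\<lambda>(g, t). inv j (S t g)) \<circ> (\<lambda>s. (g s, t - s)))"
  proof (rule continuous_on_compose)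
    show "continuous_on {t0..<t} (\<lambda>s. (g s, t - s))"
      by (intro continuous_intros continuous_on_subset[OF gc]) auto
    show "continuous_on ((\<lambda>s. (g s, t - s)) ` {t0..<t}) (\<lambda>(g, t). inv j (S t g))"
      by (rule continuous_on_subset[OF P5_cont]) auto
  qed
  then show "continuous_on {t0..<t} (\<lambda>s. inv j (S (t - s) (g s)))" by (simp add: o_def)
  show "(\<lambda>s. um (t - s) * norm (g s)) integrable_on {t0..t}"
    by (rule um_int[OF tt]) (intro continuous_intros gc)
  fix s assume "s \<in> {t0..<t}"
  then show "norm (inv j (S (t - s) (g s))) \<le> um (t - s) * norm (g s)" using P5_bound by auto
qed

end


lemma vder_iff:
  fixes f :: "real \<Rightarrow> 'a::real_normed_vector"
  shows "(f has_vector_derivative D) (at x within S) \<longleftrightarrow> ((\<lambda>y. (f y - f x) /\<^sub>R (y - x)) \<longlongrightarrow> D) (at x within S)"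
proof -
  have ev: "eventually (\<lambda>y. norm ((f y - f x) /\<^sub>R (y - x) - D) = norm (((f y - f x) - (y - x) *\<^sub>R D) /\<^sub>R norm (y - x))) (at x within S)"
    unfolding eventually_at_filter
  proof (rule always_eventually, intro allI impI)
    fix y assume "y \<noteq> x"
    then have ne: "y - x \<noteq> 0" by simp
    have "(f y - f x) /\<^sub>R (y - x) - D = inverse (y - x) *\<^sub>R ((f y - f x) - (y - x) *\<^sub>R D)"
      using ne by (simp add: scaleR_diff_right)
    then show "norm ((f y - f x) /\<^sub>R (y - x) - D) = norm (((f y - f x) - (y - x) *\<^sub>R D) /\<^sub>R norm (y - x))"
      by (simp add: divide_simps)
  qed
  have "(f has_vector_derivative D) (at x within S) \<longleftrightarrow> ((\<lambda>y. ((f y - f x) - (y - x) *\<^sub>R D) /\<^sub>R norm (y - x)) \<longlongrightarrow> 0) (at x within S)"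
    unfolding has_vector_derivative_def has_derivative_at_within by (simp add: bounded_linear_scaleR_left)
  also have "\<dots> \<longleftrightarrow> ((\<lambda>y. norm (((f y - f x) - (y - x) *\<^sub>R D) /\<^sub>R norm (y - x))) \<longlongrightarrow> 0) (at x within S)"
    by (rule tendsto_norm_zero_iff[symmetric])
  also have "\<dots> \<longleftrightarrow> ((\<lambda>y. norm ((f y - f x) /\<^sub>R (y - x) - D)) \<longlongrightarrow> 0) (at x within S)"
    by (rule tendsto_cong) (use ev in \<open>simp add: eq_commute\<close>)
  also have "\<dots> \<longleftrightarrow> ((\<lambda>y. (f y - f x) /\<^sub>R (y - x) - D) \<longlongrightarrow> 0) (at x within S)"
    by (rule tendsto_norm_zero_iff)
  also have "\<dots> \<longleftrightarrow> ((\<lambda>y. (f y - f x) /\<^sub>R (y - x)) \<longlongrightarrow> D) (at x within S)"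
    by (rule LIM_zero_iff)
  finally show ?thesis .
qed

context standing_assumptions begin

lemma S_lin: "t \<ge> 0 \<Longrightarrow> bounded_linear (S t)"
  using P3_sg unfolding C0_semigroup_def by blast
lemma S_0: "S 0 x = x"
  using P3_sg unfolding C0_semigroup_def by simp
lemma S_add: "s \<ge> 0 \<Longrightarrow> t \<ge> 0 \<Longrightarrow> S (s + t) x = S s (S t x)"
  using P3_sg unfolding C0_semigroup_def by simp
lemma S_cont: "continuous_on {0..} (\<lambda>t. S t x)"
  using P3_sg unfolding C0_semigroup_def by blast
lemma S_isCont: "t > 0 \<Longrightarrow> isCont (\<lambda>t. S t x) t"
  by (rule continuous_on_interior[OF S_cont]) simp

lemma S_bound:
  assumes "a > 0"
  shows "\<exists>B. \<forall>r\<in>{a..b}. \<forall>g. norm (S r g) \<le> B * norm g"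
proof -
  obtain K where K: "K > 0" "\<And>x. norm (j x) \<le> norm x * K"
    using bounded_linear.pos_bounded[OF P1_j(1)] by blast
  have "compact (um ` {a..b})"
    by (rule compact_continuous_image[OF continuous_on_subset[OF P5_um(1)]]) (use assms in auto)
  then obtain M0 where M0: "\<And>x. x \<in> um ` {a..b} \<Longrightarrow> norm x \<le> M0"
    using compact_imp_bounded bounded_iff by metis
  show ?thesis
  proof (intro exI[of _ "M0 * K"] ballI allI)
    fix r g assume r: "r \<in> {a..b}"
    have rp: "r > 0" using r assms by auto
    have "norm (S r g) = norm (j (inv j (S r g)))" using jinv[OF rp] by simp
    also have "\<dots> \<le> norm (inv j (S r g)) * K" by (rule K(2))
    also have "\<dots> \<le> (um r * norm g) * K" using P5_bound rp K by (intro mult_right_mono) auto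
    also have "\<dots> \<le> (M0 * norm g) * K"
      using M0[of "um r"] r K abs_ge_self[of "um r"] by (intro mult_right_mono mult_right_mono) auto
    finally show "norm (S r g) \<le> M0 * K * norm g" by (simp add: ac_simps)
  qed
qed


lemma S_diff: "t \<ge> 0 \<Longrightarrow> S t a - S t b = S t (a - b)"
  using linear_diff[OF bounded_linear.linear[OF S_lin]] by simp
lemma S_scale: "t \<ge> 0 \<Longrightarrow> c *\<^sub>R S t a = S t (c *\<^sub>R a)"
  using linear_scale[OF bounded_linear.linear[OF S_lin]] by simp
lemma S_plus: "t \<ge> 0 \<Longrightarrow> S t a + S t b = S t (a + b)"
  using linear_add[OF bounded_linear.linear[OF S_lin]] by simp

lemma S_tendsto_0:
  assumes "\<tau> > 0" and lim: "(q \<longlongrightarrow> 0) F" and ev: "eventually (\<lambda>h. r h \<in> {\<tau>/2..2*\<tau>}) F"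
  shows "((\<lambda>h. S (r h) (q h)) \<longlongrightarrow> 0) F"
proof -
  obtain B where B: "\<forall>r\<in>{\<tau>/2..2*\<tau>}. \<forall>g. norm (S r g) \<le> B * norm g"
    using S_bound[of "\<tau>/2" "2*\<tau>"] assms(1) by auto
  show ?thesis
  proof (rule Lim_null_comparison)
    show "eventually (\<lambda>h. norm (S (r h) (q h)) \<le> B * norm (q h)) F"
      using ev by eventually_elim (use B in blast)
    show "((\<lambda>h. B * norm (q h)) \<longlongrightarrow> 0) F"
      using tendsto_mult_right_zero[OF tendsto_norm_zero[OF lim], of B] by simp
  qed
qed

lemma S_der:
  assumes tp: "\<tau> > 0"
  shows "((\<lambda>r. S r (j (i p))) has_vector_derivative S \<tau> (A p)) (at \<tau>)"
proof -
  define x where "x = j (i p)"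
  define q where "q = (\<lambda>h. (S h x - x) /\<^sub>R h)"
  have qlim: "(q \<longlongrightarrow> A p) (at_right 0)" unfolding q_def x_def using P3_gen by blast
  have R: "((\<lambda>r. (S r x - S \<tau> x) /\<^sub>R (r - \<tau>)) \<longlongrightarrow> S \<tau> (A p)) (at_right \<tau>)"
    unfolding filterlim_at_right_to_0[of _ _ \<tau>]
  proof (rule Lim_transform_eventually)
    show "((\<lambda>h. S \<tau> (q h)) \<longlongrightarrow> S \<tau> (A p)) (at_right 0)"
      by (rule bounded_linear.tendsto[OF S_lin qlim]) (use tp in simp)
    show "eventually (\<lambda>h. S \<tau> (q h) = (S (h + \<tau>) x - S \<tau> x) /\<^sub>R (h + \<tau> - \<tau>)) (at_right 0)"
      unfolding eventually_at_right_field
    proof (intro exI[of _ 1] conjI allI impI)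
      fix h :: real assume h: "0 < h" "h < 1"
      have "S (h + \<tau>) x = S \<tau> (S h x)" using S_add[of \<tau> h x] h tp by (simp add: add.commute)
      then show "S \<tau> (q h) = (S (h + \<tau>) x - S \<tau> x) /\<^sub>R (h + \<tau> - \<tau>)"
        unfolding q_def using tp by (simp add: S_diff S_scale)
    qed simp
  qed
  have L: "((\<lambda>r. (S r x - S \<tau> x) /\<^sub>R (r - \<tau>)) \<longlongrightarrow> S \<tau> (A p)) (at_left \<tau>)"
    unfolding filterlim_at_left_to_right filterlim_at_right_to_0[of _ _ "-\<tau>"]
  proof (rule Lim_transform_eventually)
    have "((\<lambda>h. S (\<tau> - h) (q h - A p) + S (\<tau> - h) (A p)) \<longlongrightarrow> 0 + S \<tau> (A p)) (at_right 0)"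
    proof (rule tendsto_add)
      show "((\<lambda>h. S (\<tau> - h) (q h - A p)) \<longlongrightarrow> 0) (at_right 0)"
      proof (rule S_tendsto_0[OF tp])
        show "((\<lambda>h. q h - A p) \<longlongrightarrow> 0) (at_right 0)" using LIM_zero[OF qlim] .
        show "eventually (\<lambda>h. \<tau> - h \<in> {\<tau>/2..2*\<tau>}) (at_right 0)"
          unfolding eventually_at_right_field by (rule exI[of _ "\<tau>/2"]) (use tp in auto)
      qed
      have "((\<lambda>h. \<tau> - h) \<longlongrightarrow> \<tau> - 0) (at_right 0)" by (intro tendsto_intros)
      then show "((\<lambda>h. S (\<tau> - h) (A p)) \<longlongrightarrow> S \<tau> (A p)) (at_right 0)"
        using isCont_tendsto_compose[OF S_isCont[OF tp]] by simp
    qed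
    then show "((\<lambda>h. S (\<tau> - h) (q h - A p) + S (\<tau> - h) (A p)) \<longlongrightarrow> S \<tau> (A p)) (at_right 0)" by simp
    show "eventually (\<lambda>h. S (\<tau> - h) (q h - A p) + S (\<tau> - h) (A p) =
        (S (- (h + - \<tau>)) x - S \<tau> x) /\<^sub>R (- (h + - \<tau>) - \<tau>)) (at_right 0)"
      unfolding eventually_at_right_field
    proof (intro exI[of _ \<tau>] conjI allI impI)
      fix h :: real assume h: "0 < h" "h < \<tau>"
      have e1: "- (h + - \<tau>) = \<tau> - h" by simp
      have "S \<tau> x = S (\<tau> - h) (S h x)" using S_add[of "\<tau> - h" h x] h by simp
      then have d1: "S (\<tau> - h) x - S \<tau> x = S (\<tau> - h) (x - S h x)" using S_diff[of "\<tau> - h"] h by simp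
      have d2: "inverse (- h) *\<^sub>R (x - S h x) = q h" unfolding q_def by (simp add: scaleR_diff_right)
      have "(S (\<tau> - h) x - S \<tau> x) /\<^sub>R (\<tau> - h - \<tau>) = inverse (- h) *\<^sub>R S (\<tau> - h) (x - S h x)"
        using d1 by simp
      also have "\<dots> = S (\<tau> - h) (q h)" using S_scale[of "\<tau> - h"] h d2 by simp
      finally have "(S (\<tau> - h) x - S \<tau> x) /\<^sub>R (\<tau> - h - \<tau>) = S (\<tau> - h) (q h)" .
      moreover have "S (\<tau> - h) (q h - A p) + S (\<tau> - h) (A p) = S (\<tau> - h) (q h)"
        using h by (simp add: S_plus)
      ultimately show "S (\<tau> - h) (q h - A p) + S (\<tau> - h) (A p) =
        (S (- (h + - \<tau>)) x - S \<tau> x) /\<^sub>R (- (h + - \<tau>) - \<tau>)" unfolding e1 by simp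
    qed (use tp in simp)
  qed
  have "((\<lambda>r. (S r x - S \<tau> x) /\<^sub>R (r - \<tau>)) \<longlongrightarrow> S \<tau> (A p)) (at \<tau>)"
    using L R filterlim_at_split by blast
  then show ?thesis unfolding vder_iff x_def .
qed


lemma F_der:
  fixes \<phi> :: "real \<Rightarrow> 'p"
  assumes st: "s0 < t" and wd: "((\<lambda>s. j (i (\<phi> s))) has_vector_derivative w') (at s0)"
  shows "((\<lambda>s. S (t - s) (j (i (\<phi> s)))) has_vector_derivative S (t - s0) (w' - A (\<phi> s0))) (at s0)"
proof -
  define x where "x = j (i (\<phi> s0))"
  define \<tau> where "\<tau> = t - s0"
  have tp: "\<tau> > 0" using st unfolding \<tau>_def by simp
  have dA: "((\<lambda>s. S (t - s) x) has_vector_derivative (- 1) *\<^sub>R S \<tau> (A (\<phi> s0))) (at s0)"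
  proof -
    have "((\<lambda>s. t - s) has_vector_derivative - 1) (at s0)"
      by (auto intro!: derivative_eq_intros)
    moreover have "((\<lambda>r. S r x) has_vector_derivative S \<tau> (A (\<phi> s0))) (at ((\<lambda>s. t - s) s0))"
      unfolding x_def \<tau>_def using S_der[of "t - s0" "\<phi> s0"] st by simp
    ultimately have "(((\<lambda>r. S r x) \<circ> (\<lambda>s. t - s)) has_vector_derivative (- 1) *\<^sub>R S \<tau> (A (\<phi> s0))) (at s0)"
      by (rule vector_diff_chain_at)
    then show ?thesis by (simp add: o_def)
  qed
  define Q where "Q = (\<lambda>s. (j (i (\<phi> s)) - x) /\<^sub>R (s - s0))"
  have Qlim: "(Q \<longlongrightarrow> w') (at s0)" using wd unfolding vder_iff Q_def x_def .
  have ev: "eventually (\<lambda>s. t - s \<in> {\<tau>/2..2*\<tau>}) (at s0)"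
    unfolding eventually_at by (rule exI[of _ "\<tau>/2"]) (use tp in \<open>auto simp: dist_real_def \<tau>_def split: abs_split\<close>)
  have dB: "((\<lambda>s. S (t - s) (j (i (\<phi> s)) - x)) has_vector_derivative S \<tau> w') (at s0)"
    unfolding vder_iff
  proof (rule Lim_transform_eventually)
    have "((\<lambda>s. S (t - s) (Q s - w') + S (t - s) w') \<longlongrightarrow> 0 + S \<tau> w') (at s0)"
    proof (rule tendsto_add)
      show "((\<lambda>s. S (t - s) (Q s - w')) \<longlongrightarrow> 0) (at s0)"
        by (rule S_tendsto_0[OF tp LIM_zero[OF Qlim] ev])
      have "((\<lambda>s. t - s) \<longlongrightarrow> t - s0) (at s0)" by (intro tendsto_intros)
      then have "((\<lambda>s. S (t - s) w') \<longlongrightarrow> S (t - s0) w') (at s0)"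
        by (rule isCont_tendsto_compose[OF S_isCont[OF tp[unfolded \<tau>_def]], of "\<lambda>s. t - s"])
      then show "((\<lambda>s. S (t - s) w') \<longlongrightarrow> S \<tau> w') (at s0)" unfolding \<tau>_def .
    qed
    then show "((\<lambda>s. S (t - s) (Q s - w') + S (t - s) w') \<longlongrightarrow> S \<tau> w') (at s0)" by simp
    show "eventually (\<lambda>s. S (t - s) (Q s - w') + S (t - s) w' =
       (S (t - s) (j (i (\<phi> s)) - x) - S (t - s0) (j (i (\<phi> s0)) - x)) /\<^sub>R (s - s0)) (at s0)"
      using ev
    proof (rule eventually_mono)
      fix s assume "t - s \<in> {\<tau>/2..2*\<tau>}"
      then have s: "t - s \<ge> 0" using tp by auto
      have "S (t - s0) (j (i (\<phi> s0)) - x) = 0"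
        unfolding x_def using S_lin[of "t - s0"] st by (simp add: linear_simps)
      moreover have "S (t - s) (Q s - w') + S (t - s) w' = S (t - s) (Q s)" using S_plus[OF s] by simp
      moreover have "S (t - s) (Q s) = (S (t - s) (j (i (\<phi> s)) - x)) /\<^sub>R (s - s0)"
        unfolding Q_def using S_scale[OF s] by simp
      ultimately show "S (t - s) (Q s - w') + S (t - s) w' =
       (S (t - s) (j (i (\<phi> s)) - x) - S (t - s0) (j (i (\<phi> s0)) - x)) /\<^sub>R (s - s0)" by simp
    qed
  qed
  have "((\<lambda>s. S (t - s) x + S (t - s) (j (i (\<phi> s)) - x)) has_vector_derivative
         (- 1) *\<^sub>R S \<tau> (A (\<phi> s0)) + S \<tau> w') (at s0)"
    by (rule has_vector_derivative_add[OF dA dB])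
  moreover have "(- 1) *\<^sub>R S \<tau> (A (\<phi> s0)) + S \<tau> w' = S (t - s0) (w' - A (\<phi> s0))"
    using S_diff[of \<tau> w' "A (\<phi> s0)"] tp unfolding \<tau>_def by simp
  ultimately have d: "((\<lambda>s. S (t - s) x + S (t - s) (j (i (\<phi> s)) - x)) has_vector_derivative
         S (t - s0) (w' - A (\<phi> s0))) (at s0)" by simp
  show ?thesis
  proof (rule has_vector_derivative_transform_within_open[OF d, of "{..<t}"])
    fix y :: real assume "y \<in> {..<t}"
    then have "t - y \<ge> 0" by simp
    then show "S (t - y) x + S (t - y) (j (i (\<phi> y)) - x) = S (t - y) (j (i (\<phi> y)))"
      using S_plus by simp
  qed (use st in auto)
qed

end


context standing_assumptions begin

lemma A_bl: "bounded_linear A"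
proof -
  obtain c C where "c > 0" and CC: "\<forall>f. c * norm f \<le> norm (j (i f)) + norm (A f) \<and> norm (j (i f)) + norm (A f) \<le> C * norm f"
    using P2_equiv by blast
  show ?thesis
  proof (rule bounded_linear_intro[of _ C])
    show "A (x + y) = A x + A y" for x y using P2_lin by (simp add: linear_add)
    show "A (r *\<^sub>R x) = r *\<^sub>R A x" for r x using P2_lin by (simp add: linear_scale)
    show "norm (A x) \<le> norm x * C" for x
    proof -
      have "norm (A x) \<le> C * norm x" using CC[rule_format, of x] norm_ge_zero[of "j (i x)"] by linarith
      then show ?thesis by (simp add: mult.commute)
    qed
  qed
qed

lemma inv_j_diff: "a \<in> range j \<Longrightarrow> b \<in> range j \<Longrightarrow> inv j (a - b) = inv j a - inv j b"
proof -
  assume "a \<in> range j" "b \<in> range j"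
  then obtain x y where xy: "a = j x" "b = j y" by blast
  have "a - b = j (x - y)" using xy linear_diff[OF bounded_linear.linear[OF P1_j(1)]] by simp
  then show ?thesis using xy P1_j(2) by simp
qed

lemma P_cont:
  fixes \<phi> :: "real \<Rightarrow> 'p"
  assumes pc: "continuous_on {t0..t} \<phi>" and gr: "\<forall>s\<in>{t0..t}. (i (\<phi> s), s) \<in> DomP"
  shows "continuous_on {t0..t} (\<lambda>s. P (i (\<phi> s)) s)"
proof -
  have ic: "continuous_on {t0..t} (\<lambda>s. i (\<phi> s))" by (rule bounded_linear.continuous_on[OF P1_i(1) pc])
  have gc: "continuous_on {t0..t} (\<lambda>s. (i (\<phi> s), s))" by (intro continuous_intros ic)
  define C where "C = (\<lambda>s. (i (\<phi> s), s)) ` {t0..t}"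
  have "compact C" unfolding C_def by (rule compact_continuous_image[OF gc]) simp
  moreover have "C \<subseteq> DomP" using gr unfolding C_def by auto
  ultimately obtain L M where LM: "\<forall>(f, t) \<in> C. \<forall>(f', t') \<in> C. norm (P f t - P f' t') \<le> L * norm (f - f') + M * \<bar>t - t'\<bar>"
    using P6_lip compact_imp_closed compact_imp_bounded by meson
  have lip: "norm (P (i (\<phi> s)) s - P (i (\<phi> x)) x) \<le> L * norm (i (\<phi> s) - i (\<phi> x)) + M * \<bar>s - x\<bar>"
    if "s \<in> {t0..t}" "x \<in> {t0..t}" for s x
  proof -
    have "(i (\<phi> s), s) \<in> C" "(i (\<phi> x), x) \<in> C" using that unfolding C_def by auto
    then show ?thesis using LM by fastforce
  qed
  show ?thesis
    unfolding continuous_on_def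
  proof
    fix x assume x: "x \<in> {t0..t}"
    have "((\<lambda>s. P (i (\<phi> s)) s - P (i (\<phi> x)) x) \<longlongrightarrow> 0) (at x within {t0..t})"
    proof (rule Lim_null_comparison)
      show "eventually (\<lambda>s. norm (P (i (\<phi> s)) s - P (i (\<phi> x)) x) \<le> L * norm (i (\<phi> s) - i (\<phi> x)) + M * \<bar>s - x\<bar>) (at x within {t0..t})"
        unfolding eventually_at_filter by (rule always_eventually) (use lip x in blast)
      have "((\<lambda>s. i (\<phi> s)) \<longlongrightarrow> i (\<phi> x)) (at x within {t0..t})" using ic x unfolding continuous_on_def by blast
      then have "((\<lambda>s. L * norm (i (\<phi> s) - i (\<phi> x)) + M * \<bar>s - x\<bar>) \<longlongrightarrow> L * norm (i (\<phi> x) - i (\<phi> x)) + M * \<bar>x - x\<bar>) (at x within {t0..t})"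
        by (intro tendsto_intros)
      then show "((\<lambda>s. L * norm (i (\<phi> s) - i (\<phi> x)) + M * \<bar>s - x\<bar>) \<longlongrightarrow> 0) (at x within {t0..t})" by simp
    qed
    then show "((\<lambda>s. P (i (\<phi> s)) s) \<longlongrightarrow> P (i (\<phi> x)) x) (at x within {t0..t})"
      by (simp add: LIM_zero_iff)
  qed
qed


lemma ident:
  fixes \<phi> :: "real \<Rightarrow> 'p" and \<phi>' :: "real \<Rightarrow> 'm"
  assumes tt: "t0 \<le> t" and pc: "continuous_on {t0..t} \<phi>"
    and pd: "\<And>s. s \<in> {t0<..<t} \<Longrightarrow> ((\<lambda>s. j (i (\<phi> s))) has_vector_derivative \<phi>' s) (at s)"
    and p'c: "continuous_on {t0..t} \<phi>'"
    and gr: "\<forall>s\<in>{t0..t}. (i (\<phi> s), s) \<in> DomP"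
  shows "(\<lambda>s. inv j (S (t - s) (P (i (\<phi> s)) s))) integrable_on {t0..t} \<and>
        (\<lambda>s. inv j (S (t - s) (\<phi>' s - A (\<phi> s) - P (i (\<phi> s)) s))) integrable_on {t0..t} \<and>
        i (\<phi> t) - inv j (S (t - t0) (j f0))
          - integral {t0..t} (\<lambda>s. inv j (S (t - s) (P (i (\<phi> s)) s)))
        = inv j (S (t - t0) (j (i (\<phi> t0) - f0)))
          + integral {t0..t} (\<lambda>s. inv j (S (t - s) (\<phi>' s - A (\<phi> s) - P (i (\<phi> s)) s)))"
proof -
  define D where "D = (\<lambda>s. \<phi>' s - A (\<phi> s))"
  define Pg where "Pg = (\<lambda>s. P (i (\<phi> s)) s)"
  define hD where "hD = (\<lambda>s. inv j (S (t - s) (D s)))"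
  define hP where "hP = (\<lambda>s. inv j (S (t - s) (Pg s)))"
  define he where "he = (\<lambda>s. inv j (S (t - s) (D s - Pg s)))"
  have Dc: "continuous_on {t0..t} D" unfolding D_def
    by (intro continuous_on_diff p'c bounded_linear.continuous_on[OF A_bl pc])
  have Pc: "continuous_on {t0..t} Pg" unfolding Pg_def by (rule P_cont[OF pc gr])
  have hDi: "hD integrable_on {t0..t}" unfolding hD_def by (rule Sj_int[OF tt Dc])
  have hPi: "hP integrable_on {t0..t}" unfolding hP_def by (rule Sj_int[OF tt Pc])
  have hei: "he integrable_on {t0..t}" unfolding he_def by (rule Sj_int[OF tt continuous_on_diff[OF Dc Pc]])
  \<comment> \<open>FTC in F_-\<close>
  define Fd where "Fd = (\<lambda>s. S (t - s) (j (i (\<phi> s))))"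
  have Fdc: "continuous_on {t0..t} Fd"
  proof -
    have "continuous_on {t0..t} ((\<lambda>(f, t). inv j (S t (j f))) \<circ> (\<lambda>s. (i (\<phi> s), t - s)))"
    proof (rule continuous_on_compose)
      show "continuous_on {t0..t} (\<lambda>s. (i (\<phi> s), t - s))"
        by (intro continuous_intros bounded_linear.continuous_on[OF P1_i(1) pc])
      show "continuous_on ((\<lambda>s. (i (\<phi> s), t - s)) ` {t0..t}) (\<lambda>(f, t). inv j (S t (j f)))"
        by (rule continuous_on_subset[OF P4_cont]) auto
    qed
    then have "continuous_on {t0..t} (\<lambda>s. j (inv j (S (t - s) (j (i (\<phi> s))))))"
      by (intro bounded_linear.continuous_on[OF P1_j(1)]) (simp add: o_def)
    moreover have "j (inv j (S (t - s) (j (i (\<phi> s))))) = Fd s" if "s \<in> {t0..t}" for s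
      unfolding Fd_def using P4_inv that by (simp add: f_inv_into_f)
    ultimately show ?thesis by (rule continuous_on_cong[THEN iffD1, OF refl, rotated])
  qed
  have "((\<lambda>s. S (t - s) (D s)) has_integral (Fd t - Fd t0)) {t0..t}"
  proof (rule fundamental_theorem_of_calculus_interior[OF tt Fdc])
    fix s assume s: "s \<in> {t0<..<t}"
    show "(Fd has_vector_derivative S (t - s) (D s)) (at s)"
      unfolding Fd_def D_def by (rule F_der) (use s pd in auto)
  qed
  moreover have "((\<lambda>s. S (t - s) (D s)) has_integral j (integral {t0..t} hD)) {t0..t}"
  proof (rule has_integral_spike[of "{t}"])
    show "negligible {t}" by simp
    show "((j \<circ> hD) has_integral j (integral {t0..t} hD)) {t0..t}"
      by (rule has_integral_linear[OF integrable_integral[OF hDi] P1_j(1)])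
    fix s assume "s \<in> {t0..t} - {t}"
    then have "t - s > 0" by auto
    then show "S (t - s) (D s) = (j \<circ> hD) s" unfolding hD_def o_def using jinv by simp
  qed
  ultimately have jD: "j (integral {t0..t} hD) = Fd t - Fd t0" by (rule has_integral_unique[rotated])
  define X0 where "X0 = inv j (S (t - t0) (j (i (\<phi> t0))))"
  define Y where "Y = inv j (S (t - t0) (j f0))"
  have rX0: "S (t - t0) (j (i (\<phi> t0))) \<in> range j" and rY: "S (t - t0) (j f0) \<in> range j"
    using P4_inv tt by auto
  have "Fd t - Fd t0 = j (i (\<phi> t)) - j X0" unfolding Fd_def X0_def using rX0 by (simp add: S_0 f_inv_into_f)
  also have "\<dots> = j (i (\<phi> t) - X0)" using linear_diff[OF bounded_linear.linear[OF P1_j(1)]] by simp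
  finally have iD: "integral {t0..t} hD = i (\<phi> t) - X0" using jD P1_j(2) by (simp add: inj_eq)
  have ie: "integral {t0..t} he = integral {t0..t} hD - integral {t0..t} hP"
  proof -
    have "integral {t0..t} (\<lambda>s. hD s - hP s) = integral {t0..t} he"
    proof (rule integral_spike[of "{t}"])
      show "negligible {t}" by simp
      fix s assume "s \<in> {t0..t} - {t}"
      then have sp: "t - s > 0" by auto
      have "S (t - s) (D s - Pg s) = S (t - s) (D s) - S (t - s) (Pg s)" using S_diff sp by simp
      then show "he s = hD s - hP s" unfolding he_def hD_def hP_def
        using inv_j_diff P5_inv sp by simp
    qed
    then show ?thesis using integral_diff[OF hDi hPi] by simp
  qed
  have dterm: "inv j (S (t - t0) (j (i (\<phi> t0) - f0))) = X0 - Y"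
  proof -
    have "S (t - t0) (j (i (\<phi> t0) - f0)) = S (t - t0) (j (i (\<phi> t0))) - S (t - t0) (j f0)"
      using S_diff tt linear_diff[OF bounded_linear.linear[OF P1_j(1)]] by simp
    then show ?thesis unfolding X0_def Y_def using inv_j_diff[OF rX0 rY] by simp
  qed
  have "i (\<phi> t) - Y - integral {t0..t} hP = (X0 - Y) + integral {t0..t} he"
    using ie iD by (simp add: algebra_simps)
  then show ?thesis using hPi hei dterm unfolding hP_def he_def Y_def Pg_def D_def by simp
qed


lemma main:
  fixes f0 :: 'f and t0 :: real and T :: ereal
    and \<phi> :: "real \<Rightarrow> 'p" and \<phi>' :: "real \<Rightarrow> 'm"
  assumes T: "ereal t0 < T"
    and phi_cont: "continuous_on {t. t0 \<le> t \<and> ereal t < T} \<phi>"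
    and phi_deriv: "\<forall>t \<in> {t. t0 \<le> t \<and> ereal t < T}.
           ((\<lambda>s. j (i (\<phi> s))) has_vector_derivative \<phi>' t) (at t within {t. t0 \<le> t \<and> ereal t < T})"
    and phi'_cont: "continuous_on {t. t0 \<le> t \<and> ereal t < T} \<phi>'"
    and graph: "\<forall>t \<in> {t. t0 \<le> t \<and> ereal t < T}. (i (\<phi> t), t) \<in> DomP"
  shows
    "continuous_on {t. t0 \<le> t \<and> ereal t < T} (\<lambda>t. i (\<phi> t)) \<and>
     (\<forall>t \<in> {t. t0 \<le> t \<and> ereal t < T}.
        (\<lambda>s. inv j (S (t - s) (P (i (\<phi> s)) s))) integrable_on {t0..t} \<and>
        (\<lambda>s. inv j (S (t - s) (\<phi>' s - A (\<phi> s) - P (i (\<phi> s)) s))) integrable_on {t0..t} \<and>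
        i (\<phi> t) - inv j (S (t - t0) (j f0))
          - integral {t0..t} (\<lambda>s. inv j (S (t - s) (P (i (\<phi> s)) s)))
        = inv j (S (t - t0) (j (i (\<phi> t0) - f0)))
          + integral {t0..t} (\<lambda>s. inv j (S (t - s) (\<phi>' s - A (\<phi> s) - P (i (\<phi> s)) s)))) \<and>
     (\<forall>\<delta> \<epsilon>. \<delta> \<ge> 0 \<and> norm (i (\<phi> t0) - f0) \<le> \<delta> \<and>
        continuous_on {t. t0 \<le> t \<and> ereal t < T} \<epsilon> \<and>
        (\<forall>t \<in> {t. t0 \<le> t \<and> ereal t < T}. 0 \<le> \<epsilon> t \<and>
            norm (\<phi>' t - A (\<phi> t) - P (i (\<phi> t)) t) \<le> \<epsilon> t) \<longrightarrow>
        (\<forall>t \<in> {t. t0 \<le> t \<and> ereal t < T}.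
           (\<lambda>s. um (t - s) * \<epsilon> s) integrable_on {t0..t} \<and>
           norm (i (\<phi> t) - inv j (S (t - t0) (j f0))
                 - integral {t0..t} (\<lambda>s. inv j (S (t - s) (P (i (\<phi> s)) s))))
             \<le> u (t - t0) * \<delta> + integral {t0..t} (\<lambda>s. um (t - s) * \<epsilon> s)))"
proof -
  define I where "I = {t. t0 \<le> t \<and> ereal t < T}"
  have sub: "{t0..t} \<subseteq> I" if "t \<in> I" for t
  proof
    fix x assume x: "x \<in> {t0..t}"
    then have "ereal x \<le> ereal t" by simp
    then show "x \<in> I" using that x le_less_trans[of "ereal x" "ereal t" T] unfolding I_def by auto
  qed
  have I_int: "s \<in> interior I" if "t0 < s" "s < t" "t \<in> I" for s t
  proof -
    have "{t0<..<t} \<subseteq> I" using sub[OF that(3)] by auto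
    then have "{t0<..<t} \<subseteq> interior I" by (rule interior_maximal) simp
    then show ?thesis using that by auto
  qed
  have part1: "continuous_on I (\<lambda>t. i (\<phi> t))"
    using bounded_linear.continuous_on[OF P1_i(1) phi_cont] unfolding I_def .
  have part2: "(\<lambda>s. inv j (S (t - s) (P (i (\<phi> s)) s))) integrable_on {t0..t} \<and>
        (\<lambda>s. inv j (S (t - s) (\<phi>' s - A (\<phi> s) - P (i (\<phi> s)) s))) integrable_on {t0..t} \<and>
        i (\<phi> t) - inv j (S (t - t0) (j f0))
          - integral {t0..t} (\<lambda>s. inv j (S (t - s) (P (i (\<phi> s)) s)))
        = inv j (S (t - t0) (j (i (\<phi> t0) - f0)))
          + integral {t0..t} (\<lambda>s. inv j (S (t - s) (\<phi>' s - A (\<phi> s) - P (i (\<phi> s)) s)))"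
    if t: "t \<in> I" for t
  proof (rule ident)
    show tt: "t0 \<le> t" using t unfolding I_def by simp
    show "continuous_on {t0..t} \<phi>" by (rule continuous_on_subset[OF phi_cont sub[OF t, unfolded I_def]])
    show "continuous_on {t0..t} \<phi>'" by (rule continuous_on_subset[OF phi'_cont sub[OF t, unfolded I_def]])
    show "\<forall>s\<in>{t0..t}. (i (\<phi> s), s) \<in> DomP" using graph sub[OF t] unfolding I_def by blast
    fix s assume s: "s \<in> {t0<..<t}"
    then have sI: "s \<in> I" using sub[OF t] by auto
    have "((\<lambda>s. j (i (\<phi> s))) has_vector_derivative \<phi>' s) (at s within I)"
      using phi_deriv sI unfolding I_def by blast
    moreover have "at s within I = at s" using I_int[of s t] s t by (intro at_within_interior) auto
    ultimately show "((\<lambda>s. j (i (\<phi> s))) has_vector_derivative \<phi>' s) (at s)" by simp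
  qed
  have part3: "(\<lambda>s. um (t - s) * \<epsilon> s) integrable_on {t0..t} \<and>
           norm (i (\<phi> t) - inv j (S (t - t0) (j f0))
                 - integral {t0..t} (\<lambda>s. inv j (S (t - s) (P (i (\<phi> s)) s))))
             \<le> u (t - t0) * \<delta> + integral {t0..t} (\<lambda>s. um (t - s) * \<epsilon> s)"
    if H: "\<delta> \<ge> 0" "norm (i (\<phi> t0) - f0) \<le> \<delta>" "continuous_on I \<epsilon>"
      "\<forall>t \<in> I. 0 \<le> \<epsilon> t \<and> norm (\<phi>' t - A (\<phi> t) - P (i (\<phi> t)) t) \<le> \<epsilon> t"
      and t: "t \<in> I" for \<delta> \<epsilon> t
  proof -
    have tt: "t0 \<le> t" using t unfolding I_def by simp
    define he where "he = (\<lambda>s. inv j (S (t - s) (\<phi>' s - A (\<phi> s) - P (i (\<phi> s)) s)))"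
    define k where "k = (\<lambda>s. um (t - s) * \<epsilon> s)"
    have ki: "k integrable_on {t0..t}" unfolding k_def
      by (rule um_int[OF tt continuous_on_subset[OF H(3) sub[OF t]]])
    have P2: "he integrable_on {t0..t}" and eq: "i (\<phi> t) - inv j (S (t - t0) (j f0))
          - integral {t0..t} (\<lambda>s. inv j (S (t - s) (P (i (\<phi> s)) s)))
        = inv j (S (t - t0) (j (i (\<phi> t0) - f0))) + integral {t0..t} he"
      using part2[OF t] unfolding he_def by auto
    define he2 where "he2 = (\<lambda>s. if s = t then 0 else he s)"
    define k2 where "k2 = (\<lambda>s. if s = t then 0 else k s)"
    have "integral {t0..t} he = integral {t0..t} he2"
      by (rule integral_spike[of "{t}"]) (auto simp: he2_def)
    moreover have "integral {t0..t} k = integral {t0..t} k2"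
      by (rule integral_spike[of "{t}"]) (auto simp: k2_def)
    moreover have "norm (integral {t0..t} he2) \<le> integral {t0..t} k2"
    proof (rule integral_norm_bound_integral)
      show "he2 integrable_on {t0..t}" by (rule integrable_spike[OF P2, of "{t}"]) (auto simp: he2_def)
      show "k2 integrable_on {t0..t}" by (rule integrable_spike[OF ki, of "{t}"]) (auto simp: k2_def)
      fix s assume s: "s \<in> {t0..t}"
      show "norm (he2 s) \<le> k2 s"
      proof (cases "s = t")
        case True then show ?thesis by (simp add: he2_def k2_def)
      next
        case False
        then have sp: "t - s > 0" using s by auto
        have sI: "s \<in> I" using s sub[OF t] by auto
        have "norm (he s) \<le> um (t - s) * norm (\<phi>' s - A (\<phi> s) - P (i (\<phi> s)) s)"
          unfolding he_def using P5_bound sp by blast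
        also have "\<dots> \<le> um (t - s) * \<epsilon> s"
          by (rule mult_left_mono) (use H(4) sI P5_um(2) sp in \<open>auto intro: less_imp_le\<close>)
        finally show ?thesis using False by (simp add: he2_def k2_def k_def)
      qed
    qed
    ultimately have b1: "norm (integral {t0..t} he) \<le> integral {t0..t} k" by simp
    have "norm (inv j (S (t - t0) (j (i (\<phi> t0) - f0)))) \<le> u (t - t0) * norm (i (\<phi> t0) - f0)"
      using P4_bound tt by simp
    also have "\<dots> \<le> u (t - t0) * \<delta>"
      by (rule mult_left_mono) (use H(2) P4_u(2) tt in \<open>auto intro: less_imp_le\<close>)
    finally have b2: "norm (inv j (S (t - t0) (j (i (\<phi> t0) - f0)))) \<le> u (t - t0) * \<delta>" .
    have "norm (i (\<phi> t) - inv j (S (t - t0) (j f0))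
          - integral {t0..t} (\<lambda>s. inv j (S (t - s) (P (i (\<phi> s)) s))))
        \<le> norm (inv j (S (t - t0) (j (i (\<phi> t0) - f0)))) + norm (integral {t0..t} he)"
      unfolding eq by (rule norm_triangle_ineq)
    also have "\<dots> \<le> u (t - t0) * \<delta> + integral {t0..t} k" using b1 b2 by simp
    finally show ?thesis using ki unfolding k_def by simp
  qed
  show ?thesis
    unfolding I_def[symmetric]
    using part1 part2 part3 by blast
qed

end
theorem lemma3p4:
  fixes i :: "'p::banach \<Rightarrow> 'f::banach"
    and j :: "'f \<Rightarrow> 'm::banach"
    and A :: "'p \<Rightarrow> 'm"
    and S :: "real \<Rightarrow> 'm \<Rightarrow> 'm"
    and u um :: "real \<Rightarrow> real"
    and \<sigma> :: real
    and P :: "'f \<Rightarrow> real \<Rightarrow> 'm"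
    and DomP :: "('f \<times> real) set"
    and f0 :: 'f and t0 :: real and T :: ereal
    and \<phi> :: "real \<Rightarrow> 'p" and \<phi>' :: "real \<Rightarrow> 'm"
  assumes std: "standing_assumptions i j A S u um \<sigma> P DomP"
    and init: "(f0, t0) \<in> DomP" "f0 \<in> range i"
    and T: "ereal t0 < T"
    and phi_cont: "continuous_on {t. t0 \<le> t \<and> ereal t < T} \<phi>"
    and phi_deriv: "\<forall>t \<in> {t. t0 \<le> t \<and> ereal t < T}.
           ((\<lambda>s. j (i (\<phi> s))) has_vector_derivative \<phi>' t) (at t within {t. t0 \<le> t \<and> ereal t < T})"
    and phi'_cont: "continuous_on {t. t0 \<le> t \<and> ereal t < T} \<phi>'"
    and graph: "\<forall>t \<in> {t. t0 \<le> t \<and> ereal t < T}. (i (\<phi> t), t) \<in> DomP"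
  shows
    "continuous_on {t. t0 \<le> t \<and> ereal t < T} (\<lambda>t. i (\<phi> t)) \<and>
     (\<forall>t \<in> {t. t0 \<le> t \<and> ereal t < T}.
        (\<lambda>s. inv j (S (t - s) (P (i (\<phi> s)) s))) integrable_on {t0..t} \<and>
        (\<lambda>s. inv j (S (t - s) (\<phi>' s - A (\<phi> s) - P (i (\<phi> s)) s))) integrable_on {t0..t} \<and>
        i (\<phi> t) - inv j (S (t - t0) (j f0))
          - integral {t0..t} (\<lambda>s. inv j (S (t - s) (P (i (\<phi> s)) s)))
        = inv j (S (t - t0) (j (i (\<phi> t0) - f0)))
          + integral {t0..t} (\<lambda>s. inv j (S (t - s) (\<phi>' s - A (\<phi> s) - P (i (\<phi> s)) s)))) \<and>
     (\<forall>\<delta> \<epsilon>. \<delta> \<ge> 0 \<and> norm (i (\<phi> t0) - f0) \<le> \<delta> \<and>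
        continuous_on {t. t0 \<le> t \<and> ereal t < T} \<epsilon> \<and>
        (\<forall>t \<in> {t. t0 \<le> t \<and> ereal t < T}. 0 \<le> \<epsilon> t \<and>
            norm (\<phi>' t - A (\<phi> t) - P (i (\<phi> t)) t) \<le> \<epsilon> t) \<longrightarrow>
        (\<forall>t \<in> {t. t0 \<le> t \<and> ereal t < T}.
           (\<lambda>s. um (t - s) * \<epsilon> s) integrable_on {t0..t} \<and>
           norm (i (\<phi> t) - inv j (S (t - t0) (j f0))
                 - integral {t0..t} (\<lambda>s. inv j (S (t - s) (P (i (\<phi> s)) s))))
             \<le> u (t - t0) * \<delta> + integral {t0..t} (\<lambda>s. um (t - s) * \<epsilon> s)))"
  using standing_assumptions.main[OF std T phi_cont phi_deriv phi'_cont graph] .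

end
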